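(* Consider the closed-loop system $\dot p_i=\mathrm{sat}(v_i^{\mathrm{ms}}(\mathbf p)+v_i^{\mathrm{cv}}(\mathbf p))$, $i=1,\dots,n$, defined in the context (with true masses $P_k(\mathbf p)$). Then for any initial state $\mathbf p(t_0)\in\mathbb{R}^{dn}$, the trajectory $\mathbf p(t)$ is bounded for all $t\ge t_0$.
   Context: Setting: $n\ge2$ robots in $\mathbb{R}^d$, positions $p_i\in\mathbb{R}^d$, configuration $\mathbf p=[p_1^\top,\dots,p_n^\top]^\top\in\mathbb{R}^{dn}$; fixed sample points $q_1,\dots,q_m\in\mathbb{R}^d$; constants $\beta>0$, $\sigma_1>0$, $\sigma_2>0$, $\varepsilon\in(0,1)$, $r_{\mathrm{avoid}}>0$, $v_{\max}>0$. Mass: $P_k(\mathbf p)=\frac1n\sum_{i=1}^n e^{-\beta\|q_k-p_i\|^2}$. Meanshift command: $v_i^{\mathrm{ms}}(\mathbf p)=\dfrac{\frac{\sigma_1}{m}\sum_{k=1}^m P_k(\mathbf p)^{-1}e^{-\beta\|q_k-p_i\|^2}(q_k-p_i)}{\sum_{k=1}^m P_k(\mathbf p)^{-1}e^{-\beta\|q_k-p_i\|^2}}$. Repulsive term: $\tilde v_i^{\mathrm{cv}}=\sigma_2\sum_{j\ne i,\ \|p_i-p_j\|\le r_{\mathrm{avoid}}}\frac{r_{\mathrm{avoid}}-\|p_i-p_j\|}{\|p_i-p_j\|+\varepsilon}(p_i-p_j)$. With $\varphi=\min\{\|v_i^{\mathrm{ms}}\|^2/\varepsilon,1\}$, the gain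 is $\kappa_2=\varphi$ if $(v_i^{\mathrm{ms}})^\top\tilde v_i^{\mathrm{cv}}\ge0$ and $\kappa_2=\varphi\min\{-(1-\varepsilon)\|v_i^{\mathrm{ms}}\|^2/((v_i^{\mathrm{ms}})^\top\tilde v_i^{\mathrm{cv}}),1\}$ if $(v_i^{\mathrm{ms}})^\top\tilde v_i^{\mathrm{cv}}<0$; collision-avoidance command $v_i^{\mathrm{cv}}=\kappa_2\tilde v_i^{\mathrm{cv}}$. Saturation: $\mathrm{sat}(z)=v_{\max}z/\|z\|$ if $\|z\|>v_{\max}$, and $\mathrm{sat}(z)=z$ otherwise. *)

theory Defs
  imports "HOL-Analysis.Analysis"
begin

text \<open>Robots are indexed by 0..n-1, sample points by 0..m-1; a configuration is a
map from robot index to a position in the Euclidean space 'a (= R^d).\<close>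

definition mass :: "real \<Rightarrow> nat \<Rightarrow> (nat \<Rightarrow> 'a::euclidean_space) \<Rightarrow> (nat \<Rightarrow> 'a) \<Rightarrow> nat \<Rightarrow> real" where
  "mass \<beta> n q p k = (1 / real n) * (\<Sum>i<n. exp (- \<beta> * (norm (q k - p i))\<^sup>2))"

definition v_ms :: "real \<Rightarrow> real \<Rightarrow> nat \<Rightarrow> nat \<Rightarrow> (nat \<Rightarrow> 'a::euclidean_space) \<Rightarrow> (nat \<Rightarrow> 'a) \<Rightarrow> nat \<Rightarrow> 'a" where
  "v_ms \<beta> \<sigma>1 n m q p i =
     (1 / (\<Sum>k<m. inverse (mass \<beta> n q p k) * exp (- \<beta> * (norm (q k - p i))\<^sup>2))) *\<^sub>R
     ((\<sigma>1 / real m) *\<^sub>R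
       (\<Sum>k<m. (inverse (mass \<beta> n q p k) * exp (- \<beta> * (norm (q k - p i))\<^sup>2)) *\<^sub>R (q k - p i)))"

definition v_cv_tilde :: "real \<Rightarrow> real \<Rightarrow> real \<Rightarrow> nat \<Rightarrow> (nat \<Rightarrow> 'a::euclidean_space) \<Rightarrow> nat \<Rightarrow> 'a" where
  "v_cv_tilde \<sigma>2 \<epsilon> r n p i =
     \<sigma>2 *\<^sub>R (\<Sum>j\<in>{j. j < n \<and> j \<noteq> i \<and> norm (p i - p j) \<le> r}.
               ((r - norm (p i - p j)) / (norm (p i - p j) + \<epsilon>)) *\<^sub>R (p i - p j))"

definition kappa2 :: "real \<Rightarrow> 'a::euclidean_space \<Rightarrow> 'a \<Rightarrow> real" where
  "kappa2 \<epsilon> v vt =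
     (let \<phi> = min ((norm v)\<^sup>2 / \<epsilon>) 1 in
      if inner v vt \<ge> 0 then \<phi>
      else \<phi> * min (- (1 - \<epsilon>) * (norm v)\<^sup>2 / inner v vt) 1)"

definition sat :: "real \<Rightarrow> 'a::real_normed_vector \<Rightarrow> 'a" where
  "sat vmax z = (if norm z > vmax then (vmax / norm z) *\<^sub>R z else z)"

definition closed_loop :: "real \<Rightarrow> real \<Rightarrow> real \<Rightarrow> real \<Rightarrow> real \<Rightarrow> real \<Rightarrow> nat \<Rightarrow> nat
    \<Rightarrow> (nat \<Rightarrow> 'a::euclidean_space) \<Rightarrow> (nat \<Rightarrow> 'a) \<Rightarrow> nat \<Rightarrow> 'a" where
  "closed_loop \<beta> \<sigma>1 \<sigma>2 \<epsilon> r vmax n m q p i =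
     (let vm = v_ms \<beta> \<sigma>1 n m q p i; vt = v_cv_tilde \<sigma>2 \<epsilon> r n p i
      in sat vmax (vm + kappa2 \<epsilon> vm vt *\<^sub>R vt))"

end

theory Submission imports Defs begin
lemma ode_bound:
  fixes y :: "real \<Rightarrow> 'a::euclidean_space"
  assumes der: "\<And>t. t \<ge> t0 \<Longrightarrow> (y has_vector_derivative D t) (at t within {t0..})"
    and neg: "\<And>t. t \<ge> t0 \<Longrightarrow> norm (y t) > R \<Longrightarrow> inner (y t) (D t) < 0"
    and t1: "t1 \<ge> t0"
  shows "norm (y t1) \<le> max (norm (y t0)) R"
proof (rule ccontr)
  define M where "M = max (norm (y t0)) R"
  define f where "f t = inner (y t) (y t)" for t
  assume "\<not> norm (y t1) \<le> max (norm (y t0)) R"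
  hence big: "norm (y t1) > M" unfolding M_def by linarith
  have M0: "M \<ge> 0" unfolding M_def using norm_ge_zero[of "y t0"] by linarith
  have fn: "f t = (norm (y t))\<^sup>2" for t by (simp add: f_def power2_norm_eq_inner)
  have fder: "(f has_derivative (\<lambda>h. 2 * h * inner (y t) (D t))) (at t within {t0..})" if "t \<ge> t0" for t
  proof -
    have d: "(y has_derivative (\<lambda>h. h *\<^sub>R D t)) (at t within {t0..})"
      using der[OF that] by (simp add: has_vector_derivative_def)
    have "(f has_derivative (\<lambda>h. inner (y t) (h *\<^sub>R D t) + inner (h *\<^sub>R D t) (y t))) (at t within {t0..})"
      unfolding f_def by (rule has_derivative_inner[OF d d])
    moreover have "(\<lambda>h. inner (y t) (h *\<^sub>R D t) + inner (h *\<^sub>R D t) (y t)) = (\<lambda>h. 2 * h * inner (y t) (D t))"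
      by (auto simp: inner_commute)
    ultimately show ?thesis by simp
  qed
  have contf: "continuous_on {t0..} f"
    using fder by (meson continuous_on_eq_continuous_within has_derivative_continuous atLeast_iff)
  have "t1 \<noteq> t0" using big by (auto simp: M_def)
  hence lt: "t0 < t1" using t1 by simp
  define K where "K = {t0..t1} \<inter> f -` {..M\<^sup>2}"
  have "closed K" unfolding K_def
    by (rule continuous_closed_preimage) (auto intro: continuous_on_subset[OF contf])
  moreover have "bounded K" unfolding K_def by (rule bounded_Int) simp
  ultimately have "compact K" using compact_eq_bounded_closed by blast
  moreover have "t0 \<in> K"
  proof -
    have "norm (y t0) \<le> M" unfolding M_def by simp
    hence "f t0 \<le> M\<^sup>2" unfolding fn by (rule power_mono) simp
    thus ?thesis using lt unfolding K_def by simp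
  qed
  ultimately have "\<exists>s\<in>K. \<forall>t\<in>K. t \<le> s"
    by (intro compact_attains_sup) auto
  then obtain s where sK: "s \<in> K" and smax: "\<And>t. t \<in> K \<Longrightarrow> t \<le> s"
    by blast
  have fs: "f s \<le> M\<^sup>2" and s0: "t0 \<le> s" "s \<le> t1" using sK by (auto simp: K_def)
  have ft1: "f t1 > M\<^sup>2" using big M0 by (simp add: fn power_strict_mono)
  hence st: "s < t1" using fs s0 by (cases "s = t1") auto
  have out: "norm (y t) > R" if "s < t" "t \<le> t1" for t
  proof -
    have "t \<notin> K" using smax that by force
    hence "f t > M\<^sup>2" using that s0 by (auto simp: K_def)
    hence "(norm (y t))\<^sup>2 > M\<^sup>2" by (simp add: fn)
    hence "norm (y t) > M" using M0 by (meson power_mono not_le norm_ge_zero)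
    thus ?thesis by (simp add: M_def)
  qed
  obtain \<xi> where xi: "s < \<xi>" "\<xi> < t1" "f t1 - f s = 2 * (t1 - s) * inner (y \<xi>) (D \<xi>)"
  proof (rule mvt[OF st])
    show "continuous_on {s..t1} f" using contf s0 by (auto intro: continuous_on_subset)
    fix x assume x: "s < x" "x < t1"
    have xin: "x \<in> {t0<..}" using x s0 by simp
    have "t0 \<le> x" using x s0 by simp
    have "(f has_derivative (\<lambda>h. 2 * h * inner (y x) (D x))) (at x within {t0<..})"
      by (rule has_derivative_subset[OF fder[OF \<open>t0 \<le> x\<close>]]) auto
    thus "(f has_derivative (\<lambda>h. 2 * h * inner (y x) (D x))) (at x)"
      by (simp only: at_within_open[OF xin open_greaterThan])
  qed auto
  have "inner (y \<xi>) (D \<xi>) < 0" using neg out xi s0 by auto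
  hence "2 * (t1 - s) * inner (y \<xi>) (D \<xi>) < 0" using st by (intro mult_pos_neg) auto
  hence "f t1 < f s" using xi(3) by linarith
  thus False using fs ft1 by simp
qed
lemma mass_pos:
  assumes "n \<ge> 1" shows "mass \<beta> n q p k > 0"
proof -
  have "(\<Sum>i<n. exp (- \<beta> * (norm (q k - p i))\<^sup>2)) > 0"
    using assms by (intro sum_pos) (auto simp: lessThan_empty_iff)
  thus ?thesis using assms unfolding mass_def by simp
qed

lemma vms_inner:
  fixes p :: "nat \<Rightarrow> 'a::euclidean_space"
  assumes "n \<ge> 1" "m \<ge> 1" "\<sigma>1 > 0" and R0: "\<And>k. k < m \<Longrightarrow> norm (q k) \<le> R0"
  shows "inner (p i) (v_ms \<beta> \<sigma>1 n m q p i) \<le> (\<sigma>1 / real m) * (norm (p i) * (R0 - norm (p i)))"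
proof -
  define a where "a k = inverse (mass \<beta> n q p k) * exp (- \<beta> * (norm (q k - p i))\<^sup>2)" for k
  define S where "S = (\<Sum>k<m. a k)"
  have apos: "a k > 0" for k
  proof -
    have "mass \<beta> n q p k > 0" using mass_pos[OF assms(1)] by blast
    thus ?thesis unfolding a_def by simp
  qed
  have Spos: "S > 0" unfolding S_def using assms(2) apos by (intro sum_pos) (auto simp: lessThan_empty_iff)
  have v: "v_ms \<beta> \<sigma>1 n m q p i = (1 / S) *\<^sub>R ((\<sigma>1 / real m) *\<^sub>R (\<Sum>k<m. a k *\<^sub>R (q k - p i)))"
    unfolding v_ms_def a_def S_def by simp
  have each: "a k * inner (p i) (q k - p i) \<le> a k * (norm (p i) * (R0 - norm (p i)))" if "k < m" for k
  proof -
    have "inner (p i) (q k) \<le> norm (p i) * norm (q k)" by (rule norm_cauchy_schwarz)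
    also have "\<dots> \<le> norm (p i) * R0" using R0[OF that] by (simp add: mult_left_mono)
    finally have "inner (p i) (q k - p i) \<le> norm (p i) * (R0 - norm (p i))"
      by (simp add: inner_diff_right inner_commute power2_norm_eq_inner[symmetric] power2_eq_square algebra_simps)
    thus ?thesis using apos[of k] by (simp add: mult_left_mono)
  qed
  have "inner (p i) (\<Sum>k<m. a k *\<^sub>R (q k - p i)) = (\<Sum>k<m. a k * inner (p i) (q k - p i))"
    by (simp add: inner_sum_right)
  also have "\<dots> \<le> (\<Sum>k<m. a k * (norm (p i) * (R0 - norm (p i))))"
    using each by (intro sum_mono) auto
  also have "\<dots> = S * (norm (p i) * (R0 - norm (p i)))" unfolding S_def by (simp add: sum_distrib_right)
  finally have L: "inner (p i) (\<Sum>k<m. a k *\<^sub>R (q k - p i)) \<le> S * (norm (p i) * (R0 - norm (p i)))" .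
  have "inner (p i) (v_ms \<beta> \<sigma>1 n m q p i) = ((\<sigma>1 / real m) / S) * inner (p i) (\<Sum>k<m. a k *\<^sub>R (q k - p i))"
    unfolding v by simp
  also have "\<dots> \<le> ((\<sigma>1 / real m) / S) * (S * (norm (p i) * (R0 - norm (p i))))"
    using L Spos assms by (intro mult_left_mono) auto
  also have "\<dots> = (\<sigma>1 / real m) * (norm (p i) * (R0 - norm (p i)))" using Spos by simp
  finally show ?thesis .
qed

lemma vt_bound:
  fixes p :: "nat \<Rightarrow> 'a::euclidean_space"
  assumes "\<sigma>2 > 0" "\<epsilon> > 0" "r > 0"
  shows "norm (v_cv_tilde \<sigma>2 \<epsilon> r n p i) \<le> \<sigma>2 * real n * r"
proof -
  define J where "J = {j. j < n \<and> j \<noteq> i \<and> norm (p i - p j) \<le> r}"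
  have J: "J \<subseteq> {..<n}" unfolding J_def by auto
  hence fin: "finite J" by (rule finite_subset) simp
  have cJ: "card J \<le> n" using card_mono[OF _ J] by simp
  have trm: "norm (((r - norm (p i - p j)) / (norm (p i - p j) + \<epsilon>)) *\<^sub>R (p i - p j)) \<le> r" if "j \<in> J" for j
  proof -
    define d where "d = norm (p i - p j)"
    have d: "0 \<le> d" "d \<le> r" using that unfolding J_def d_def by auto
    have "norm (((r - d) / (d + \<epsilon>)) *\<^sub>R (p i - p j)) = (r - d) / (d + \<epsilon>) * d"
      using d assms by (simp add: d_def)
    also have "\<dots> = (r - d) * (d / (d + \<epsilon>))" by simp
    also have "\<dots> \<le> (r - d) * 1"
      using d assms by (intro mult_left_mono) auto
    also have "\<dots> \<le> r" using d by simp
    finally show ?thesis by (simp add: d_def)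
  qed
  have "norm (v_cv_tilde \<sigma>2 \<epsilon> r n p i) = \<sigma>2 * norm (\<Sum>j\<in>J. ((r - norm (p i - p j)) / (norm (p i - p j) + \<epsilon>)) *\<^sub>R (p i - p j))"
    unfolding v_cv_tilde_def J_def using assms by simp
  also have "\<dots> \<le> \<sigma>2 * (\<Sum>j\<in>J. r)"
    using assms trm by (intro mult_left_mono order.trans[OF norm_sum sum_mono]) auto
  also have "\<dots> = \<sigma>2 * (real (card J) * r)" by simp
  also have "\<dots> \<le> \<sigma>2 * (real n * r)" using cJ assms by (intro mult_left_mono) auto
  finally show ?thesis by simp
qed

lemma kappa2_bounds:
  fixes v vt :: "'a::euclidean_space"
  assumes "0 < \<epsilon>" "\<epsilon> < 1"
  shows "0 \<le> kappa2 \<epsilon> v vt" "kappa2 \<epsilon> v vt \<le> 1"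
proof -
  define \<phi> where "\<phi> = min ((norm v)\<^sup>2 / \<epsilon>) 1"
  have p: "0 \<le> \<phi>" "\<phi> \<le> 1" unfolding \<phi>_def using assms by auto
  define c where "c = min (- (1 - \<epsilon>) * (norm v)\<^sup>2 / inner v vt) 1"
  have "(\<epsilon> - 1) * (norm v)\<^sup>2 \<le> 0" using assms by (intro mult_nonpos_nonneg) auto
  hence c: "inner v vt < 0 \<Longrightarrow> 0 \<le> c" "c \<le> 1" unfolding c_def using assms
    by (auto simp: divide_nonpos_neg)
  have k: "kappa2 \<epsilon> v vt = (if inner v vt \<ge> 0 then \<phi> else \<phi> * c)"
    unfolding kappa2_def \<phi>_def c_def Let_def by simp
  show "0 \<le> kappa2 \<epsilon> v vt" unfolding k using p c by auto
  show "kappa2 \<epsilon> v vt \<le> 1" unfolding k using p c by (auto intro: mult_le_one)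
qed

lemma sat_scale:
  assumes "vmax > 0" shows "\<exists>c>0. sat vmax z = c *\<^sub>R z"
proof (cases "norm z > vmax")
  case True
  hence "vmax / norm z > 0" using assms by (intro divide_pos_pos) auto
  thus ?thesis using True unfolding sat_def by auto
next
  case False thus ?thesis unfolding sat_def by (intro exI[of _ 1]) auto
qed

lemma key:
  fixes p :: "nat \<Rightarrow> 'a::euclidean_space"
  assumes "n \<ge> 1" "m \<ge> 1" "\<sigma>1 > 0" "\<sigma>2 > 0" "0 < \<epsilon>" "\<epsilon> < 1" "r > 0" "vmax > 0"
    and R0: "\<And>k. k < m \<Longrightarrow> norm (q k) \<le> R0"
    and far: "norm (p i) > R0 + real m * (\<sigma>2 * real n * r) / \<sigma>1"
  shows "inner (p i) (closed_loop \<beta> \<sigma>1 \<sigma>2 \<epsilon> r vmax n m q p i) < 0"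
proof -
  define vm where "vm = v_ms \<beta> \<sigma>1 n m q p i"
  define vt where "vt = v_cv_tilde \<sigma>2 \<epsilon> r n p i"
  define \<kappa> where "\<kappa> = kappa2 \<epsilon> vm vt"
  define V where "V = \<sigma>2 * real n * r"
  define P where "P = norm (p i)"
  have V0: "V \<ge> 0" unfolding V_def using assms by simp
  have m0: "real m > 0" using assms by simp
  have "norm (q 0) \<le> R0" using R0 assms by simp
  hence "R0 \<ge> 0" using norm_ge_zero[of "q 0"] by linarith
  moreover have "real m * V / \<sigma>1 \<ge> 0" using m0 V0 assms by simp
  ultimately have P0: "P > 0" using far unfolding P_def V_def by linarith
  have "(\<sigma>1 / real m) * (P - R0) > V"
  proof -
    have "P - R0 > real m * V / \<sigma>1" using far unfolding P_def V_def by simp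
    hence "(\<sigma>1 / real m) * (P - R0) > (\<sigma>1 / real m) * (real m * V / \<sigma>1)"
      using assms m0 by (intro mult_strict_left_mono) auto
    thus ?thesis using assms m0 by simp
  qed
  moreover have "(\<sigma>1 / real m) * (R0 - P) = - ((\<sigma>1 / real m) * (P - R0))" by (simp add: right_diff_distrib)
  ultimately have "(\<sigma>1 / real m) * (R0 - P) + V < 0" by argo
  hence neg: "P * ((\<sigma>1 / real m) * (R0 - P) + V) < 0" using P0
    by (simp add: mult_pos_neg)
  have k: "0 \<le> \<kappa>" "\<kappa> \<le> 1" unfolding \<kappa>_def using kappa2_bounds assms by auto
  have i1: "inner (p i) vm \<le> (\<sigma>1 / real m) * (P * (R0 - P))"
    unfolding vm_def P_def using vms_inner[OF assms(1,2,3), of q R0] R0 by blast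
  have "inner (p i) vt \<le> P * norm vt" unfolding P_def by (rule norm_cauchy_schwarz)
  also have "\<dots> \<le> P * V" unfolding vt_def V_def using P0 vt_bound assms
    by (intro mult_left_mono) auto
  finally have vtb: "inner (p i) vt \<le> P * V" .
  have "\<kappa> * inner (p i) vt \<le> P * V"
  proof (cases "inner (p i) vt \<ge> 0")
    case True
    hence "\<kappa> * inner (p i) vt \<le> 1 * inner (p i) vt" using k by (intro mult_right_mono) auto
    thus ?thesis using vtb by simp
  next
    case False
    hence "\<kappa> * inner (p i) vt \<le> 0" using k by (simp add: mult_nonneg_nonpos)
    moreover have "0 \<le> P * V" using P0 V0 by simp
    ultimately show ?thesis by linarith
  qed
  hence "inner (p i) (vm + \<kappa> *\<^sub>R vt) \<le> (\<sigma>1 / real m) * (P * (R0 - P)) + P * V"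
    using i1 by (simp add: inner_add_right)
  also have "\<dots> = P * ((\<sigma>1 / real m) * (R0 - P) + V)" by (simp add: distrib_left mult.commute mult.left_commute)
  finally have u: "inner (p i) (vm + \<kappa> *\<^sub>R vt) < 0" using neg by linarith
  obtain c where c: "c > 0" "sat vmax (vm + \<kappa> *\<^sub>R vt) = c *\<^sub>R (vm + \<kappa> *\<^sub>R vt)"
    using sat_scale[OF assms(8)] by blast
  have "closed_loop \<beta> \<sigma>1 \<sigma>2 \<epsilon> r vmax n m q p i = c *\<^sub>R (vm + \<kappa> *\<^sub>R vt)"
    unfolding closed_loop_def Let_def vm_def vt_def \<kappa>_def using c vm_def vt_def \<kappa>_def by simp
  thus ?thesis using c u by (simp add: mult_pos_neg)
qed
theorem lemma4:
  fixes \<beta> \<sigma>1 \<sigma>2 \<epsilon> r vmax t0 :: real and n m :: nat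
    and q :: "nat \<Rightarrow> 'a::euclidean_space"
    and x :: "real \<Rightarrow> nat \<Rightarrow> 'a"
  assumes "n \<ge> 2" and "m \<ge> 1"
    and "\<beta> > 0" and "\<sigma>1 > 0" and "\<sigma>2 > 0" and "0 < \<epsilon>" and "\<epsilon> < 1"
    and "r > 0" and "vmax > 0"
    and sol: "\<And>t i. t \<ge> t0 \<Longrightarrow> i < n \<Longrightarrow>
       ((\<lambda>s. x s i) has_vector_derivative closed_loop \<beta> \<sigma>1 \<sigma>2 \<epsilon> r vmax n m q (x t) i)
         (at t within {t0..})"
  shows "\<exists>B. \<forall>t\<ge>t0. \<forall>i<n. norm (x t i) \<le> B"
proof -
  define R0 where "R0 = (\<Sum>k<m. norm (q k))"
  have R0: "norm (q k) \<le> R0" if "k < m" for k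
    unfolding R0_def using that by (intro member_le_sum) auto
  define Rs where "Rs = R0 + real m * (\<sigma>2 * real n * r) / \<sigma>1"
  define B where "B = Rs + (\<Sum>i<n. norm (x t0 i))"
  have n1: "n \<ge> 1" using assms by simp
  show ?thesis
  proof (intro exI[of _ B] allI impI)
    fix t i assume t: "t \<ge> t0" and i: "i < n"
    have "norm (x t i) \<le> max (norm (x t0 i)) Rs"
    proof (rule ode_bound[where y = "\<lambda>s. x s i" and D = "\<lambda>t. closed_loop \<beta> \<sigma>1 \<sigma>2 \<epsilon> r vmax n m q (x t) i"])
      fix t' assume "t0 \<le> t'"
      thus "((\<lambda>s. x s i) has_vector_derivative closed_loop \<beta> \<sigma>1 \<sigma>2 \<epsilon> r vmax n m q (x t') i) (at t' within {t0..})"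
        by (rule sol[OF _ i])
    next
      fix t' assume "t0 \<le> t'" and far: "Rs < norm (x t' i)"
      have far': "R0 + real m * (\<sigma>2 * real n * r) / \<sigma>1 < norm (x t' i)" using far unfolding Rs_def .
      show "x t' i \<bullet> closed_loop \<beta> \<sigma>1 \<sigma>2 \<epsilon> r vmax n m q (x t') i < 0"
        by (rule key[where q=q and p="x t'" and i=i, OF n1 assms(2,4-9) R0 far'])
    next
      show "t0 \<le> t" by (rule t)
    qed
    moreover have "norm (x t0 i) \<le> (\<Sum>i<n. norm (x t0 i))"
      using i by (intro member_le_sum) auto
    moreover have "0 \<le> (\<Sum>i<n. norm (x t0 i))" by (intro sum_nonneg) auto
    moreover have "Rs \<ge> 0"
    proof -
      have "norm (q 0) \<le> R0" using R0 assms by simp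
      hence "R0 \<ge> 0" using norm_ge_zero[of "q 0"] by linarith
      moreover have "real m * (\<sigma>2 * real n * r) / \<sigma>1 \<ge> 0" using assms by simp
      ultimately show ?thesis unfolding Rs_def by linarith
    qed
    ultimately show "norm (x t i) \<le> B" unfolding B_def by linarith
  qed
qed

end
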